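(* For every integer $d\ge2$ and every $q\ne0$ there exists $\Lambda_0=\Lambda_0(q,d)>0$ with the following property. Let $(X,Y,Z,W)$ be a solution of system (S) on $(-\infty,t_{max})$ satisfying: (i) $Y,W>0$; (ii) $\lim_{t\to-\infty}(X,Y,Z,W)(t)=(0,0,1,0)$; (iii) $\mathcal C>0$; (iv) $\lim_{t\to-\infty}W/Y^2=1$; (v) $\mathcal C\lambda^2\ge\Lambda_0$, where $g$ is normalized with $\lambda=\lim_{t\to-\infty}g(t)>0$. Then $$\frac{W(t)^2}{Y(t)^2}\le\frac{A_2}{A_3(d+2)}\qquad\text{for all }t\in(-\infty,t_{max}).$$
   Context: Put $A_2=d(d+2)$ and $A_3=\tfrac14d(d+2)^2q^2$. System (S) is $$X'=X(dX^2+Z^2-1)+\tfrac{A_2}{d}Y^2-2\tfrac{A_3}{d}W^2,\qquad Y'=Y(dX^2+Z^2-X),$$ $$Z'=Z(dX^2+Z^2-1)+A_3W^2,\qquad W'=W(dX^2+Z^2-2X+Z).$$ $g$ is a positive solution of $g'=gX$, and $\mathcal L=gY$. The first integral is $dX^2+A_2Y^2+Z^2-A_3W^2=1-\mathcal C\mathcal L^2$ with $\mathcal C$ constant. Under (i)–(iii), $\lambda=\lim_{t\to-\infty}g(t)$ exists, and fixing it fixes $g$ and hence $\mathcal C$; the product $\mathcal C\lambda^2$ is independent of this choice. *)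

theory Defs
  imports "HOL-Analysis.Analysis" "HOL-Library.Extended_Real"
begin

definition A2 :: "nat \<Rightarrow> real" where
  "A2 d = real d * (real d + 2)"

definition A3 :: "nat \<Rightarrow> real \<Rightarrow> real" where
  "A3 d q = (1/4) * real d * (real d + 2)^2 * q^2"

definition solves_S :: "nat \<Rightarrow> real \<Rightarrow> real set \<Rightarrow>
    (real \<Rightarrow> real) \<Rightarrow> (real \<Rightarrow> real) \<Rightarrow> (real \<Rightarrow> real) \<Rightarrow> (real \<Rightarrow> real) \<Rightarrow> bool" where
  "solves_S d q I X Y Z W \<longleftrightarrow> (\<forall>t\<in>I.
     (X has_real_derivative
        (X t * (real d * (X t)^2 + (Z t)^2 - 1) + A2 d / real d * (Y t)^2
         - 2 * A3 d q / real d * (W t)^2)) (at t) \<and>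
     (Y has_real_derivative (Y t * (real d * (X t)^2 + (Z t)^2 - X t))) (at t) \<and>
     (Z has_real_derivative (Z t * (real d * (X t)^2 + (Z t)^2 - 1) + A3 d q * (W t)^2)) (at t) \<and>
     (W has_real_derivative (W t * (real d * (X t)^2 + (Z t)^2 - 2 * X t + Z t))) (at t))"

end

theory Submission
  imports Defs
begin

lemma barrier:
  fixes f f' :: "real \<Rightarrow> real" and b c l :: real
  assumes lim: "(f \<longlongrightarrow> l) at_bot" and cl: "c \<le> l"
    and der: "\<And>s. s \<le> b \<Longrightarrow> (f has_real_derivative f' s) (at s)"
    and pos: "\<And>s. s \<le> b \<Longrightarrow> f s \<le> c \<Longrightarrow> f' s > 0"
  shows "f b > c"
proof (rule ccontr)
  assume "\<not> c < f b" hence fb: "f b \<le> c" by simp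
  from DERIV_pos_inc_left[OF der[of b] pos[OF _ fb]] obtain \<delta> where
    \<delta>: "\<delta>>0" "\<And>h. 0<h \<Longrightarrow> h<\<delta> \<Longrightarrow> f (b-h) < f b" by auto
  define s1 where "s1 = b - \<delta>/2"
  have s1b: "s1 \<le> b" and fs1: "f s1 < f b" using \<delta> by (auto simp: s1_def)
  have below: "f s \<le> f s1" if ss: "s \<le> s1" for s
  proof (rule ccontr)
    assume "\<not> f s \<le> f s1" hence gt: "f s > f s1" by simp
    have cont: "continuous_on {s..s1} f"
      proof (rule continuous_at_imp_continuous_on, rule ballI)
        fix x assume "x \<in> {s..s1}"
        hence "x \<le> b" using s1b by auto
        thus "isCont f x" using der DERIV_isCont by blast
      qed
    obtain m where m: "m \<in> {s..s1}" "\<And>y. y \<in> {s..s1} \<Longrightarrow> f m \<le> f y"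
      using continuous_attains_inf[OF compact_Icc _ cont] ss by auto
    have fm: "f m \<le> f s1" using m ss by auto
    hence fmc: "f m \<le> c" using fs1 fb by linarith
    have mb: "m \<le> b" using m s1b by auto
    have "m \<noteq> s" using gt fm by auto
    hence sm: "s < m" using m by auto
    from DERIV_pos_inc_left[OF der[OF mb] pos[OF mb fmc]] obtain e where
      e: "e>0" "\<And>h. 0<h \<Longrightarrow> h<e \<Longrightarrow> f (m-h) < f m" by auto
    define h where "h = min (e/2) (m - s)"
    have h0: "0 < h" "h < e" using e sm by (auto simp: h_def)
    hence "f (m-h) < f m" using e by auto
    moreover have "m - h \<in> {s..s1}" using m h0 by (auto simp: h_def)
    ultimately show False using m(2) by fastforce
  qed
  have "l \<le> f s1"
    by (rule tendsto_upperbound[OF lim]) (auto simp: eventually_at_bot_linorder intro!: exI[of _ s1] below)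
  then show False using fs1 fb cl by linarith
qed

lemma main:
  fixes d :: nat and q :: real and tmax :: ereal and X Y Z W g :: "real \<Rightarrow> real"
    and C lam t :: real
  assumes d2: "d \<ge> 2" and q: "q \<noteq> 0"
  and sol: "solves_S d q {t. ereal t < tmax} X Y Z W"
  and gder: "\<forall>t\<in>{t. ereal t < tmax}. g t > 0 \<and> (g has_real_derivative (g t * X t)) (at t)"
  and FI: "\<forall>t\<in>{t. ereal t < tmax}.
             real d * (X t)^2 + A2 d * (Y t)^2 + (Z t)^2 - A3 d q * (W t)^2
               = 1 - C * (g t * Y t)^2"
  and YW: "\<forall>t\<in>{t. ereal t < tmax}. Y t > 0 \<and> W t > 0"
  and limX: "(X \<longlongrightarrow> 0) at_bot" and limY: "(Y \<longlongrightarrow> 0) at_bot"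
  and limZ: "(Z \<longlongrightarrow> 1) at_bot"
  and Cpos: "C > 0"
  and limR: "((\<lambda>t. W t / (Y t)^2) \<longlongrightarrow> 1) at_bot"
  and limg: "(g \<longlongrightarrow> lam) at_bot" and lampos: "lam > 0"
  and big: "C * lam^2 \<ge> 2 * (exp 3)^2 * A3 d q / real d"
  and t: "ereal t < tmax"
  shows "(W t)^2 / (Y t)^2 \<le> A2 d / (A3 d q * (real d + 2))"
proof -
  define I where "I = {t. ereal t < tmax}"
  define dd where "dd = real d"
  define a3 where "a3 = A3 d q"
  have dd2: "dd \<ge> 2" using d2 by (simp add: dd_def)
  have a3pos: "a3 > 0" using q d2 by (simp add: a3_def A3_def)
  have A2eq: "A2 d = dd * (dd + 2)" by (simp add: A2_def dd_def)
  have A2d: "A2 d / dd = dd + 2" using dd2 by (simp add: A2eq)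
  have inI: "s \<in> I" if "s \<le> b" "b \<in> I" for s b
  proof -
    have "ereal s \<le> ereal b" using that by simp
    thus ?thesis using that unfolding I_def using le_less_trans by blast
  qed
  have tI: "t \<in> I" using t by (simp add: I_def)
  have A2d': "A2 d / real d = real d + 2" and A2eq': "A2 d = real d * (real d + 2)"
    using A2d A2eq by (simp_all add: dd_def)
  have raw: "(X has_real_derivative
        (X s * (real d * (X s)^2 + (Z s)^2 - 1) + A2 d / real d * (Y s)^2
         - 2 * A3 d q / real d * (W s)^2)) (at s) \<and>
     (Y has_real_derivative (Y s * (real d * (X s)^2 + (Z s)^2 - X s))) (at s) \<and>
     (Z has_real_derivative (Z s * (real d * (X s)^2 + (Z s)^2 - 1) + A3 d q * (W s)^2)) (at s) \<and>
     (W has_real_derivative (W s * (real d * (X s)^2 + (Z s)^2 - 2 * X s + Z s))) (at s)"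
    if "s \<in> I" for s using sol that unfolding solves_S_def I_def by blast
  have dX: "(X has_real_derivative (X s * (dd * (X s)^2 + (Z s)^2 - 1) + (dd+2) * (Y s)^2
         - 2 * a3 / dd * (W s)^2)) (at s)"
    and dY: "(Y has_real_derivative (Y s * (dd * (X s)^2 + (Z s)^2 - X s))) (at s)"
    and dZ: "(Z has_real_derivative (Z s * (dd * (X s)^2 + (Z s)^2 - 1) + a3 * (W s)^2)) (at s)"
    and dW: "(W has_real_derivative (W s * (dd * (X s)^2 + (Z s)^2 - 2 * X s + Z s))) (at s)"
    and dg: "(g has_real_derivative (g s * X s)) (at s)"
    and gp: "g s > 0" and Yp: "Y s > 0" and Wp: "W s > 0"
    and FIs: "dd * (X s)^2 + dd * (dd + 2) * (Y s)^2 + (Z s)^2 - a3 * (W s)^2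
               = 1 - C * (g s * Y s)^2"
    if "s \<in> I" for s
  proof -
    note r = raw[OF that]
    show "(X has_real_derivative (X s * (dd * (X s)^2 + (Z s)^2 - 1) + (dd+2) * (Y s)^2
         - 2 * a3 / dd * (W s)^2)) (at s)" using r by (simp add: A2d' dd_def a3_def)
    show "(Y has_real_derivative (Y s * (dd * (X s)^2 + (Z s)^2 - X s))) (at s)"
      using r by (simp add: dd_def)
    show "(Z has_real_derivative (Z s * (dd * (X s)^2 + (Z s)^2 - 1) + a3 * (W s)^2)) (at s)"
      using r by (simp add: dd_def a3_def)
    show "(W has_real_derivative (W s * (dd * (X s)^2 + (Z s)^2 - 2 * X s + Z s))) (at s)"
      using r by (simp add: dd_def)
    show "(g has_real_derivative (g s * X s)) (at s)" "g s > 0"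
      using gder that by (auto simp: I_def)
    show "Y s > 0" "W s > 0" using YW that by (auto simp: I_def)
    show "dd * (X s)^2 + dd * (dd + 2) * (Y s)^2 + (Z s)^2 - a3 * (W s)^2
               = 1 - C * (g s * Y s)^2" using FI that by (auto simp: I_def A2eq' dd_def a3_def)
  qed
  have contW: "isCont W s" and contY: "isCont Y s" if "s \<in> I" for s
    using dW[OF that] dY[OF that] DERIV_isCont by blast+

  have K: "a3 * (W b)^2 \<le> dd/2 * (Y b)^2"
    if bI: "b \<in> I" and Hb: "\<And>s. s \<le> b \<Longrightarrow> a3 * (W s)^2 \<le> dd * (Y s)^2" for b
  proof -
    have sI: "s \<in> I" if "s \<le> b" for s using inI[OF that bI] .
    have GL: "dd * (X s)^2 + (Z s)^2 \<le> 1" "C * (g s * Y s)^2 \<le> 1" if "s \<le> b" for s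
    proof -
      have e: "dd * (X s)^2 + (Z s)^2 + C * (g s * Y s)^2 = 1 - dd*(dd+2)*(Y s)^2 + a3*(W s)^2"
        using FIs[OF sI[OF that]] by linarith
      have "dd*(dd+2)*(Y s)^2 \<ge> dd * (Y s)^2" using dd2 by (simp add: mult_right_mono)
      hence le: "dd * (X s)^2 + (Z s)^2 + C * (g s * Y s)^2 \<le> 1" using e Hb[OF that] by linarith
      have "dd * (X s)^2 \<ge> 0" "(Z s)^2 \<ge> 0" "C * (g s * Y s)^2 \<ge> 0" using dd2 Cpos by auto
      thus "dd * (X s)^2 + (Z s)^2 \<le> 1" "C * (g s * Y s)^2 \<le> 1" using le by linarith+
    qed
    have Zb: "\<bar>Z s\<bar> \<le> 1" and Xb: "\<bar>X s\<bar> \<le> 1" if "s \<le> b" for s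
    proof -
      have "dd * (X s)^2 \<ge> 0" "(Z s)^2 \<ge> 0" using dd2 by auto
      hence z: "(Z s)^2 \<le> 1" and x: "dd * (X s)^2 \<le> 1" using GL[OF that] by linarith+
      have "(X s)^2 \<le> dd * (X s)^2" using dd2 mult_right_mono[of 1 dd "(X s)^2"] by simp
      thus "\<bar>X s\<bar> \<le> 1" "\<bar>Z s\<bar> \<le> 1" using z x abs_square_le_1 by (metis order_trans)+
    qed
    have Xpos: "X s > 0" if sb: "s \<le> b" for s
    proof (rule barrier[OF limX order_refl, where b=s])
      show "(X has_real_derivative (X u * (dd * (X u)^2 + (Z u)^2 - 1) + (dd+2) * (Y u)^2
         - 2 * a3 / dd * (W u)^2)) (at u)" if "u \<le> s" for u
        using dX[OF sI] that sb by auto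
      show "0 < X u * (dd * (X u)^2 + (Z u)^2 - 1) + (dd+2) * (Y u)^2 - 2 * a3 / dd * (W u)^2"
        if "u \<le> s" "X u \<le> 0" for u
      proof -
        have ub: "u \<le> b" using that sb by auto
        have "X u * (dd * (X u)^2 + (Z u)^2 - 1) \<ge> 0"
          using GL(1)[OF ub] that(2) by (simp add: mult_nonpos_nonpos)
        moreover have "2 * a3 / dd * (W u)^2 \<le> 2 * (Y u)^2"
          using Hb[OF ub] dd2 by (simp add: field_simps)
        moreover have "(Y u)^2 > 0" using Yp[OF sI[OF ub]] by simp
        moreover have "dd * (Y u)^2 > 0" using Yp[OF sI[OF ub]] dd2 by simp
        moreover have "(dd+2)*(Y u)^2 = dd*(Y u)^2 + 2*(Y u)^2" by (simp add: algebra_simps)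
        ultimately show ?thesis by linarith
      qed
    qed
    define U where "U s = W s / (Y s)^2 * exp (Z s - X s) / g s" for s
    define Vd where "Vd s = (dd * (X s)^2 + (Z s)^2) * (Z s - X s - 1) + (dd+2)/dd * (a3 * (W s)^2 - dd * (Y s)^2)" for s
    have Uder: "(U has_real_derivative U s * Vd s) (at s)" if "s \<in> I" for s
    proof -
      show ?thesis
        unfolding U_def
        using gp[OF that] Yp[OF that] dd2
        apply -
        apply (rule derivative_eq_intros dW[OF that] dY[OF that] dZ[OF that] dX[OF that] dg[OF that] refl | (simp; fail))+
        apply (simp add: U_def Vd_def field_simps power2_eq_square)
        done
    qed
    have Umono: "U b \<le> U s" if "s \<le> b" for s
    proof (rule DERIV_nonpos_imp_nonincreasing[OF that])
      fix x assume x: "s \<le> x" "x \<le> b"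
      have xI: "x \<in> I" using sI x by auto
      have "Vd x \<le> 0"
      proof -
        have "dd * (X x)^2 + (Z x)^2 \<ge> 0" using dd2 by simp
        moreover have "Z x - X x - 1 \<le> 0" using Zb[OF x(2)] Xpos[OF x(2)] by linarith
        ultimately have "(dd * (X x)^2 + (Z x)^2) * (Z x - X x - 1) \<le> 0"
          by (simp add: mult_nonneg_nonpos)
        moreover have "(dd+2)/dd * (a3 * (W x)^2 - dd * (Y x)^2) \<le> 0"
          using Hb[OF x(2)] dd2 by (intro mult_nonneg_nonpos) auto
        ultimately show ?thesis unfolding Vd_def by linarith
      qed
      moreover have "U x > 0" unfolding U_def using gp[OF xI] Yp[OF xI] Wp[OF xI] by simp
      ultimately show "\<exists>y. (U has_real_derivative y) (at x) \<and> y \<le> 0"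
        using Uder[OF xI] by (intro exI[of _ "U x * Vd x"]) (simp add: mult_nonneg_nonpos)
    qed
    have Ulim: "(U \<longlongrightarrow> 1 * exp (1 - 0) / lam) at_bot"
      unfolding U_def by (intro tendsto_intros limR limZ limX limg) (use lampos in auto)
    have Ub: "U b \<le> exp 1 / lam"
      using tendsto_lowerbound[OF Ulim] Umono by (auto simp: eventually_at_bot_linorder)
    define r where "r = W b / (g b * (Y b)^2)"
    have rU: "r = U b * exp (X b - Z b)"
      unfolding r_def U_def using gp[OF bI] Yp[OF bI] by (simp add: exp_diff field_simps)
    have "exp (X b - Z b) \<le> exp 2" using Xb[OF order_refl] Zb[OF order_refl] by simp
    moreover have "U b > 0" unfolding U_def using gp[OF bI] Yp[OF bI] Wp[OF bI] by simp
    ultimately have "U b * exp (X b - Z b) \<le> exp 1 / lam * exp 2"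
      using Ub lampos by (intro mult_mono) auto
    hence "r \<le> exp 1 / lam * exp 2" using rU by simp
    also have "... = exp 3 / lam" by (simp add: exp_add[symmetric])
    finally have r3: "r \<le> exp 3 / lam" .
    have rpos: "r > 0" unfolding r_def using gp[OF bI] Yp[OF bI] Wp[OF bI] by simp
    have r2: "r^2 \<le> (exp 3)^2 / lam^2"
      using power_mono[OF r3, of 2] rpos by (simp add: power_divide)
    have L2: "(g b * Y b)^2 \<le> 1 / C" using GL(2)[OF order_refl] Cpos by (simp add: field_simps)
    have "r^2 * (g b * Y b)^2 \<le> (exp 3)^2 / lam^2 * (1 / C)"
      using mult_mono[OF r2 L2] by simp
    also have "... = (exp 3)^2 / (C * lam^2)" by simp
    also have "... \<le> (exp 3)^2 / (2 * (exp 3)^2 * a3 / dd)"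
      using big lampos Cpos a3pos dd2 unfolding a3_def[symmetric] dd_def[symmetric]
      by (intro divide_left_mono) auto
    also have "... = dd / (2 * a3)" using a3pos dd2 by (simp add: field_simps)
    finally have key: "r^2 * (g b * Y b)^2 \<le> dd / (2 * a3)" .
    have Weq: "(W b)^2 = r^2 * (g b * Y b)^2 * (Y b)^2"
      unfolding r_def using gp[OF bI] Yp[OF bI] by (simp add: field_simps power2_eq_square)
    have "a3 * (W b)^2 = a3 * (r^2 * (g b * Y b)^2) * (Y b)^2" using Weq by simp
    also have "... \<le> a3 * (dd / (2 * a3)) * (Y b)^2"
      using key a3pos by (intro mult_right_mono mult_left_mono) auto
    also have "... = dd/2 * (Y b)^2" using a3pos by simp
    finally show ?thesis .
  qed
  define phi where "phi s = a3 * (W s)^2 - 3/4 * dd * (Y s)^2" for s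
  have contphi: "continuous_on {u..v} phi" if "v \<in> I" for u v
  proof (rule continuous_at_imp_continuous_on, rule ballI)
    fix x assume "x \<in> {u..v}"
    hence xI: "x \<in> I" using inI that by auto
    show "isCont phi x" unfolding phi_def
      by (intro continuous_intros contW[OF xI] contY[OF xI])
  qed
  have main: "a3 * (W t)^2 \<le> dd * (Y t)^2"
  proof (rule ccontr)
    assume "\<not> ?thesis"
    hence tbad: "a3 * (W t)^2 > dd * (Y t)^2" by simp
    have "((\<lambda>s. (W s / (Y s)^2)^2 * (Y s)^2) \<longlongrightarrow> 1^2 * 0^2) at_bot"
      by (intro tendsto_intros limR limY)
    hence "eventually (\<lambda>s. (W s / (Y s)^2)^2 * (Y s)^2 < 3/4 * dd / a3) at_bot"
      using dd2 a3pos by (intro order_tendstoD(2)) auto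
    then obtain T where T: "\<And>s. s \<le> T \<Longrightarrow> (W s / (Y s)^2)^2 * (Y s)^2 < 3/4 * dd / a3"
      by (auto simp: eventually_at_bot_linorder)
    define T' where "T' = min T t"
    have neg: "phi s < 0" if "s \<le> T'" for s
    proof -
      have sI: "s \<in> I" using inI[OF _ tI] that by (auto simp: T'_def)
      have "(W s / (Y s)^2)^2 * (Y s)^2 < 3/4 * dd / a3" using T that by (auto simp: T'_def)
      hence "a3 * ((W s / (Y s)^2)^2 * (Y s)^2) * (Y s)^2 < a3 * (3/4 * dd / a3) * (Y s)^2"
        using a3pos Yp[OF sI] by (intro mult_strict_right_mono mult_strict_left_mono) auto
      moreover have "a3 * ((W s / (Y s)^2)^2 * (Y s)^2) * (Y s)^2 = a3 * (W s)^2"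
        using Yp[OF sI] by (simp add: field_simps power2_eq_square)
      moreover have "a3 * (3/4 * dd / a3) * (Y s)^2 = 3/4 * dd * (Y s)^2" using a3pos by simp
      ultimately show ?thesis unfolding phi_def by linarith
    qed
    have phit: "phi t > 0"
    proof -
      have "dd * (Y t)^2 > 0" using Yp[OF tI] dd2 by simp
      thus ?thesis using tbad unfolding phi_def by linarith
    qed
    have T't: "T' \<le> t" by (simp add: T'_def)
    define S where "S = {s \<in> {T'..t}. phi s = 0}"
    obtain z where z: "T' \<le> z" "z \<le> t" "phi z = 0"
      using IVT'[of phi T' 0 t] neg[of T'] phit T't contphi[OF tI] by auto
    have Sne: "S \<noteq> {}" using z by (auto simp: S_def)
    have Sbdd: "bdd_below S" by (auto simp: S_def bdd_below_def)
    have Scl: "closed S" unfolding S_def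
      by (rule continuous_closed_preimage_constant[OF contphi[OF tI]]) simp
    define t1 where "t1 = Inf S"
    have t1S: "t1 \<in> S" unfolding t1_def using closed_contains_Inf[OF Sne Sbdd Scl] .
    hence t1: "T' \<le> t1" "t1 \<le> t" "phi t1 = 0" by (auto simp: S_def)
    have t1I: "t1 \<in> I" using inI[OF t1(2) tI] .
    have le0: "phi s \<le> 0" if "s \<le> t1" for s
    proof (rule ccontr)
      assume "\<not> phi s \<le> 0" hence ps: "phi s > 0" by simp
      have Ts: "T' \<le> s" using neg[of s] ps by linarith
      have sI: "s \<in> I" using inI[OF that t1I] .
      obtain z where z: "T' \<le> z" "z \<le> s" "phi z = 0"
        using IVT'[of phi T' 0 s] neg[of T'] ps Ts contphi[OF sI] by auto
      have "z \<in> S" using z that t1 by (auto simp: S_def)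
      hence "t1 \<le> z" unfolding t1_def using Sbdd by (rule cInf_lower)
      hence "z = s" "s = t1" using z that by auto
      thus False using ps t1 by simp
    qed
    have "a3 * (W t1)^2 \<le> dd/2 * (Y t1)^2"
    proof (rule K[OF t1I])
      fix s assume "s \<le> t1"
      hence "phi s \<le> 0" by (rule le0)
      moreover have "(Y s)^2 \<ge> 0" by simp
      hence "3/4 * dd * (Y s)^2 \<le> dd * (Y s)^2" using dd2 by (simp add: mult_right_mono)
      ultimately show "a3 * (W s)^2 \<le> dd * (Y s)^2" unfolding phi_def by linarith
    qed
    moreover have "dd * (Y t1)^2 > 0" using Yp[OF t1I] dd2 by simp
    ultimately show False using t1(3) unfolding phi_def by linarith
  qed
  have "A2 d / (A3 d q * (real d + 2)) = dd / a3"
    using dd2 by (simp add: A2eq a3_def dd_def)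
  moreover have "(W t)^2 / (Y t)^2 \<le> dd / a3"
    using main a3pos Yp[OF tI] by (simp add: field_simps)
  ultimately show ?thesis by simp
qed


theorem theorem5p3:
  fixes d :: nat and q :: real
  assumes "d \<ge> 2" and "q \<noteq> 0"
  shows "\<exists>Lam0 :: real. Lam0 > 0 \<and>
    (\<forall>(tmax :: ereal) (X :: real \<Rightarrow> real) (Y :: real \<Rightarrow> real) (Z :: real \<Rightarrow> real)
       (W :: real \<Rightarrow> real) (g :: real \<Rightarrow> real) (C :: real) (lam :: real).
       solves_S d q {t. ereal t < tmax} X Y Z W
       \<and> (\<forall>t\<in>{t. ereal t < tmax}. g t > 0 \<and> (g has_real_derivative (g t * X t)) (at t))
       \<and> (\<forall>t\<in>{t. ereal t < tmax}.
             real d * (X t)^2 + A2 d * (Y t)^2 + (Z t)^2 - A3 d q * (W t)^2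
               = 1 - C * (g t * Y t)^2)
       \<and> (\<forall>t\<in>{t. ereal t < tmax}. Y t > 0 \<and> W t > 0)
       \<and> (X \<longlongrightarrow> 0) at_bot \<and> (Y \<longlongrightarrow> 0) at_bot \<and> (Z \<longlongrightarrow> 1) at_bot \<and> (W \<longlongrightarrow> 0) at_bot
       \<and> C > 0
       \<and> ((\<lambda>t. W t / (Y t)^2) \<longlongrightarrow> 1) at_bot
       \<and> (g \<longlongrightarrow> lam) at_bot \<and> lam > 0
       \<and> C * lam^2 \<ge> Lam0
       \<longrightarrow> (\<forall>t\<in>{t. ereal t < tmax}. (W t)^2 / (Y t)^2 \<le> A2 d / (A3 d q * (real d + 2))))"
proof (intro exI[of _ "2 * (exp 3)^2 * A3 d q / real d"] conjI allI impI)
  show "2 * (exp 3)^2 * A3 d q / real d > 0" using assms by (simp add: A3_def)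
next
  fix tmax :: ereal and X Y Z W g :: "real \<Rightarrow> real" and C lam :: real
  assume H: "solves_S d q {t. ereal t < tmax} X Y Z W
       \<and> (\<forall>t\<in>{t. ereal t < tmax}. g t > 0 \<and> (g has_real_derivative (g t * X t)) (at t))
       \<and> (\<forall>t\<in>{t. ereal t < tmax}.
             real d * (X t)^2 + A2 d * (Y t)^2 + (Z t)^2 - A3 d q * (W t)^2
               = 1 - C * (g t * Y t)^2)
       \<and> (\<forall>t\<in>{t. ereal t < tmax}. Y t > 0 \<and> W t > 0)
       \<and> (X \<longlongrightarrow> 0) at_bot \<and> (Y \<longlongrightarrow> 0) at_bot \<and> (Z \<longlongrightarrow> 1) at_bot \<and> (W \<longlongrightarrow> 0) at_bot
       \<and> C > 0
       \<and> ((\<lambda>t. W t / (Y t)^2) \<longlongrightarrow> 1) at_bot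
       \<and> (g \<longlongrightarrow> lam) at_bot \<and> lam > 0
       \<and> C * lam^2 \<ge> 2 * (exp 3)^2 * A3 d q / real d"
  show "\<forall>t\<in>{t. ereal t < tmax}. (W t)^2 / (Y t)^2 \<le> A2 d / (A3 d q * (real d + 2))"
  proof
    fix t assume "t \<in> {t. ereal t < tmax}"
    thus "(W t)^2 / (Y t)^2 \<le> A2 d / (A3 d q * (real d + 2))"
      using main[OF assms, of tmax X Y Z W g C lam t] H by auto
  qed
qed

end
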